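(* Let $d,p\in\mathbb N$, let $\mathcal X$ be a bounded, nonempty, Borel subset of $\mathbb R^d$ and $P_X$ a Borel probability distribution on $\mathcal X$. For $a\ge0$ let $k_{p,a}(x,y)=(x^\top y+a)^p$. Then there exists $C(p,d,P_X)>0$, depending only on $p$, $d$ and $P_X$, such that for all $a\ge0$ and $\gamma>0$, the quantity $H_\gamma$ associated with $k_{p,a}$ and $P_X$ satisfies $H_\gamma\le C(p,d,P_X)$.
   Context: For a kernel $k$ with a decomposition $k(x,y)=\sum_{r\in\mathcal R}\nu_re_r(x)e_r(y)$ where the $\nu_r>0$ are the (positive) eigenvalues of the integral operator $f\mapsto\int k(x,\cdot)f(x)\,dP_X(x)$ on $L_2(P_X)$ and $(e_r)$ are corresponding $L_2(P_X)$-orthonormal eigenfunctions, define for $\gamma>0$: $a_r=1/(1+\gamma/\nu_r)$ and $H_\gamma=\sup_{x\in\mathcal X}\sum_{r\in\mathcal R}a_re_r(x)^2$ (this does not depend on the choice of orthonormal eigenfunctions). *)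

theory Defs
  imports "HOL-Probability.Probability"
begin

definition poly_kernel :: "nat \<Rightarrow> real \<Rightarrow> real ^ 'd \<Rightarrow> real ^ 'd \<Rightarrow> real" where
  "poly_kernel p a x y = (x \<bullet> y + a) ^ p"

definition eigen_decomp ::
  "('a \<Rightarrow> 'a \<Rightarrow> real) \<Rightarrow> 'a measure \<Rightarrow> 'a set \<Rightarrow> nat set \<Rightarrow> (nat \<Rightarrow> real) \<Rightarrow> (nat \<Rightarrow> 'a \<Rightarrow> real) \<Rightarrow> bool"
where
  "eigen_decomp k P X R \<nu> e \<longleftrightarrow>
     (\<forall>r\<in>R. \<nu> r > 0) \<and>
     (\<forall>r\<in>R. e r \<in> borel_measurable P \<and> integrable P (\<lambda>x. (e r x)\<^sup>2)) \<and>
     (\<forall>r\<in>R. \<forall>s\<in>R. (\<integral>x. e r x * e s x \<partial>P) = (if r = s then 1 else 0)) \<and>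
     (\<forall>r\<in>R. \<forall>y\<in>X. integrable P (\<lambda>x. k x y * e r x) \<and>
                     (\<integral>x. k x y * e r x \<partial>P) = \<nu> r * e r y) \<and>
     (\<forall>x\<in>X. \<forall>y\<in>X. ((\<lambda>r. \<nu> r * e r x * e r y) has_sum k x y) R)"

definition H_gamma ::
  "real \<Rightarrow> 'a set \<Rightarrow> nat set \<Rightarrow> (nat \<Rightarrow> real) \<Rightarrow> (nat \<Rightarrow> 'a \<Rightarrow> real) \<Rightarrow> ereal"
where
  "H_gamma \<gamma> X R \<nu> e =
     (SUP x\<in>X. ereal (\<Sum>\<^sub>\<infinity>r\<in>R. (1 / (1 + \<gamma> / \<nu> r)) * (e r x)\<^sup>2))"

end

theory Submission
  imports Defs
begin


definition uo :: "'d option \<Rightarrow> real^'d \<Rightarrow> real" where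
  "uo j x = (case j of None \<Rightarrow> 1 | Some i \<Rightarrow> x$i)"
definition wo :: "real \<Rightarrow> 'd option \<Rightarrow> real" where
  "wo a j = (case j of None \<Rightarrow> a | Some i \<Rightarrow> 1)"
definition Mf :: "'d option list \<Rightarrow> real^'d \<Rightarrow> real" where
  "Mf s x = prod_list (map (\<lambda>j. uo j x) s)"
definition Wf :: "real \<Rightarrow> 'd option list \<Rightarrow> real" where
  "Wf a s = prod_list (map (wo a) s)"
definition Lp :: "nat \<Rightarrow> ('d::finite) option list set" where
  "Lp p = {s. set s \<subseteq> UNIV \<and> length s = p}"

lemma finite_Lp: "finite (Lp p)"
  unfolding Lp_def by (rule finite_lists_length_eq) simp

lemma lin_expand:
  fixes x y :: "real^'d"
  shows "x \<bullet> y + a = (\<Sum>j\<in>UNIV. wo a j * uo j x * uo j y)"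
proof -
  have "(\<Sum>j\<in>UNIV. wo a j * uo j x * uo j y) = (\<Sum>j\<in>insert None (range Some). wo a j * uo j x * uo j y)"
    by (simp add: UNIV_option_conv)
  also have "\<dots> = a + (\<Sum>j\<in>range Some. wo a j * uo j x * uo j y)"
    by (subst sum.insert) (auto simp: wo_def uo_def)
  also have "(\<Sum>j\<in>range Some. wo a j * uo j x * uo j y) = (\<Sum>i\<in>UNIV. x$i * y$i)"
    by (subst sum.reindex) (auto simp: wo_def uo_def)
  finally show ?thesis by (simp add: inner_vec_def)
qed

lemma kernel_expand:
  fixes x y :: "real^'d"
  shows "(x \<bullet> y + a)^p = (\<Sum>s\<in>Lp p. Wf a s * Mf s x * Mf s y)"
proof (induction p)
  case 0
  have "(Lp 0 :: 'd option list set) = {[]}" by (auto simp: Lp_def)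
  then show ?case by (simp add: Wf_def Mf_def)
next
  case (Suc p)
  have L: "Lp (Suc p) = (\<lambda>(xs, n). n#xs) ` (Lp p \<times> UNIV)"
    unfolding Lp_def by (rule lists_length_Suc_eq)
  have inj: "inj_on (\<lambda>(xs, n). n#xs) (Lp p \<times> (UNIV::'d option set))"
    by (auto simp: inj_on_def)
  have "(\<Sum>s\<in>Lp (Suc p). Wf a s * Mf s x * Mf s y)
      = (\<Sum>(s,j)\<in>Lp p \<times> UNIV. Wf a (j#s) * Mf (j#s) x * Mf (j#s) y)"
    unfolding L by (subst sum.reindex[OF inj]) (simp add: case_prod_unfold)
  also have "\<dots> = (\<Sum>s\<in>Lp p. \<Sum>j\<in>UNIV. (wo a j * uo j x * uo j y) * (Wf a s * Mf s x * Mf s y))"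
    by (subst sum.cartesian_product[symmetric]) (simp add: Wf_def Mf_def mult_ac)
  also have "\<dots> = (\<Sum>j\<in>UNIV. wo a j * uo j x * uo j y) * (\<Sum>s\<in>Lp p. Wf a s * Mf s x * Mf s y)"
    by (simp add: sum_product sum.swap[of _ "Lp p"])
  finally show ?case using Suc by (simp add: lin_expand)
qed

lemma Wf_nonneg: "a \<ge> 0 \<Longrightarrow> Wf a s \<ge> 0"
  unfolding Wf_def by (induction s) (auto simp: wo_def split: option.splits)

lemma Wf_zero_iff: "a \<ge> 0 \<Longrightarrow> Wf a s = 0 \<longleftrightarrow> (a = 0 \<and> None \<in> set s)"
  unfolding Wf_def by (induction s) (auto simp: wo_def split: option.splits)

lemma uo_meas[measurable]: "uo j \<in> borel_measurable borel"
  by (cases j) (auto simp: uo_def intro!: borel_measurable_continuous_onI continuous_intros)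

lemma Mf_meas[measurable]: "Mf s \<in> borel_measurable borel"
  unfolding Mf_def
  by (induction s) auto

lemma Mf_bound:
  assumes "\<forall>x\<in>X. norm x \<le> B0"
  shows "\<forall>x\<in>X. \<bar>Mf s x\<bar> \<le> (max 1 B0) ^ length s"
proof (induction s)
  case Nil then show ?case by (simp add: Mf_def)
next
  case (Cons j s)
  show ?case
  proof
    fix x assume x: "x \<in> X"
    have "\<bar>uo j x\<bar> \<le> max 1 B0"
    proof (cases j)
      case (Some i)
      have "\<bar>x$i\<bar> \<le> B0" using assms x component_le_norm_cart[of x i] by force
      then show ?thesis by (simp add: Some uo_def)
    qed (simp add: uo_def)
    moreover have "\<bar>Mf s x\<bar> \<le> (max 1 B0) ^ length s" using Cons x by auto
    ultimately have "\<bar>uo j x\<bar> * \<bar>Mf s x\<bar> \<le> max 1 B0 * (max 1 B0) ^ length s"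
      by (intro mult_mono) auto
    then show "\<bar>Mf (j#s) x\<bar> \<le> (max 1 B0) ^ length (j#s)"
      by (simp add: Mf_def abs_mult)
  qed
qed



lemma expand_sq:
  fixes w v :: "'s \<Rightarrow> real" and u :: "'i \<Rightarrow> 's \<Rightarrow> real"
  shows "(\<Sum>s\<in>S. w s * (v s - (\<Sum>i\<in>I. c i * u i s))\<^sup>2)
     = (\<Sum>s\<in>S. w s * (v s)\<^sup>2) - 2 * (\<Sum>i\<in>I. c i * (\<Sum>s\<in>S. w s * v s * u i s))
       + (\<Sum>i\<in>I. \<Sum>j\<in>I. c i * c j * (\<Sum>s\<in>S. w s * u i s * u j s))"
proof -
  have sq: "(x - y)\<^sup>2 = x\<^sup>2 - 2 * (x * y) + y * y" for x y :: real
    by (simp add: power2_eq_square algebra_simps)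
  have a: "w s * (v s - (\<Sum>i\<in>I. c i * u i s))\<^sup>2 = w s * (v s)\<^sup>2 - 2 * (\<Sum>i\<in>I. c i * (w s * v s * u i s))
       + (\<Sum>i\<in>I. \<Sum>j\<in>I. c i * c j * (w s * u i s * u j s))" for s
  proof -
    have 1: "w s * (v s * (\<Sum>i\<in>I. c i * u i s)) = (\<Sum>i\<in>I. c i * (w s * v s * u i s))"
      by (simp add: sum_distrib_left mult_ac)
    have 2: "w s * ((\<Sum>i\<in>I. c i * u i s) * (\<Sum>i\<in>I. c i * u i s)) = (\<Sum>i\<in>I. \<Sum>j\<in>I. c i * c j * (w s * u i s * u j s))"
      by (simp add: sum_product sum_distrib_left mult_ac)
    show ?thesis unfolding sq right_diff_distrib distrib_left 1[symmetric] 2[symmetric] by (simp add: mult_ac)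
  qed
  have b1: "(\<Sum>s\<in>S. \<Sum>i\<in>I. c i * (w s * v s * u i s)) = (\<Sum>i\<in>I. c i * (\<Sum>s\<in>S. w s * v s * u i s))"
    by (subst sum.swap) (simp add: sum_distrib_left)
  have b2: "(\<Sum>s\<in>S. \<Sum>i\<in>I. \<Sum>j\<in>I. c i * c j * (w s * u i s * u j s))
     = (\<Sum>i\<in>I. \<Sum>j\<in>I. c i * c j * (\<Sum>s\<in>S. w s * u i s * u j s))"
    by (subst sum.swap, rule sum.cong[OF refl], subst sum.swap, simp add: sum_distrib_left)
  show ?thesis
    unfolding a sum.distrib sum_subtractf b2[symmetric] b1[symmetric] sum_distrib_left[symmetric] ..
qed

lemma bessel_w:
  fixes w v :: "'s \<Rightarrow> real" and u :: "'i \<Rightarrow> 's \<Rightarrow> real"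
  assumes w: "\<And>s. s \<in> S \<Longrightarrow> w s \<ge> 0"
    and on: "\<And>i j. i \<in> I \<Longrightarrow> j \<in> I \<Longrightarrow> (\<Sum>s\<in>S. w s * u i s * u j s) = (if i = j then 1 else 0)"
    and fI: "finite I"
  shows "(\<Sum>i\<in>I. (\<Sum>s\<in>S. w s * v s * u i s)\<^sup>2) \<le> (\<Sum>s\<in>S. w s * (v s)\<^sup>2)"
proof -
  define c where "c i = (\<Sum>s\<in>S. w s * v s * u i s)" for i
  have "0 \<le> (\<Sum>s\<in>S. w s * (v s - (\<Sum>i\<in>I. c i * u i s))\<^sup>2)"
    by (intro sum_nonneg mult_nonneg_nonneg w) auto
  also have "\<dots> = (\<Sum>s\<in>S. w s * (v s)\<^sup>2) - 2 * (\<Sum>i\<in>I. c i * c i)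
       + (\<Sum>i\<in>I. \<Sum>j\<in>I. c i * c j * (if i = j then 1 else 0))"
    unfolding expand_sq c_def[symmetric] using on by (intro arg_cong2[where f="(+)"] sum.cong) auto
  also have "(\<Sum>i\<in>I. \<Sum>j\<in>I. c i * c j * (if i = j then 1 else 0)) = (\<Sum>i\<in>I. c i * c i)"
    using fI by (simp add: if_distrib sum.If_cases cong: if_cong)
  finally show ?thesis by (simp add: c_def power2_eq_square)
qed

lemma count_bound:
  fixes w :: "'s \<Rightarrow> real" and u :: "'i \<Rightarrow> 's \<Rightarrow> real"
  assumes w: "\<And>s. s \<in> S \<Longrightarrow> w s \<ge> 0" and fS: "finite S"
    and on: "\<And>i j. i \<in> I \<Longrightarrow> j \<in> I \<Longrightarrow> (\<Sum>s\<in>S. w s * u i s * u j s) = (if i = j then 1 else 0)"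
    and fI: "finite I"
  shows "card I \<le> card S"
proof -
  have b: "(\<Sum>i\<in>I. w s0 * (u i s0)\<^sup>2) \<le> 1" if s0: "s0 \<in> S" for s0
  proof -
    have "(\<Sum>i\<in>I. (\<Sum>s\<in>S. w s * (if s = s0 then 1 else 0) * u i s)\<^sup>2)
        \<le> (\<Sum>s\<in>S. w s * (if s = s0 then 1 else 0)\<^sup>2)"
      by (rule bessel_w[OF w on fI])
    moreover have e1: "(\<Sum>s\<in>S. w s * (if s = s0 then 1 else 0) * u i s) = w s0 * u i s0" for i
    proof -
      have "(\<Sum>s\<in>S. w s * (if s = s0 then 1 else 0) * u i s) = (\<Sum>s\<in>S. if s = s0 then w s0 * u i s0 else 0)"
        by (rule sum.cong) auto
      then show ?thesis using s0 fS by simp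
    qed
    moreover have e2: "(\<Sum>s\<in>S. w s * (if s = s0 then 1 else 0)\<^sup>2) = w s0"
    proof -
      have "(\<Sum>s\<in>S. w s * (if s = s0 then 1 else 0)\<^sup>2) = (\<Sum>s\<in>S. if s = s0 then w s0 else 0)"
        by (rule sum.cong) auto
      then show ?thesis using s0 fS by simp
    qed
    ultimately have *: "(\<Sum>i\<in>I. (w s0 * u i s0)\<^sup>2) \<le> w s0" by simp
    show ?thesis
    proof (cases "w s0 = 0")
      case False
      then have "w s0 > 0" using w[OF s0] by simp
      have "(\<Sum>i\<in>I. (w s0 * u i s0)\<^sup>2) = w s0 * (\<Sum>i\<in>I. w s0 * (u i s0)\<^sup>2)"
        by (simp add: sum_distrib_left power2_eq_square mult_ac)
      with * \<open>w s0 > 0\<close> show ?thesis by (simp add: mult_le_cancel_left1)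
    qed simp
  qed
  have "real (card I) = (\<Sum>i\<in>I. \<Sum>s\<in>S. w s * (u i s)\<^sup>2)"
    using on by (simp add: power2_eq_square mult_ac)
  also have "\<dots> = (\<Sum>s\<in>S. \<Sum>i\<in>I. w s * (u i s)\<^sup>2)" by (rule sum.swap)
  also have "\<dots> \<le> (\<Sum>s\<in>S. 1)" by (intro sum_mono b)
  finally show ?thesis by simp
qed



definition beta :: "('d::finite) option list \<Rightarrow> (real^'d) measure \<Rightarrow> (nat \<Rightarrow> real^'d \<Rightarrow> real) \<Rightarrow> nat \<Rightarrow> real" where
  "beta s P e r = (\<integral>y. Mf s y * e r y \<partial>P)"

locale LX =
  fixes X :: "(real^'d::finite) set" and P :: "(real^'d) measure"
  assumes Xs: "X \<in> sets borel" and bX: "bounded X" and ps: "prob_space P"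
    and sP: "sets P = sets borel" and PX: "emeasure P X = 1"
begin

lemma AEX: "AE x in P. x \<in> X"
proof -
  interpret prob_space P by (rule ps)
  have "X \<in> events" using Xs sP by simp
  moreover have "prob X = 1" using PX by (simp add: measure_def)
  ultimately show ?thesis using AE_in_set_eq_1 by blast
qed

lemma measP: fixes f :: "real^'d \<Rightarrow> real" assumes "f \<in> borel_measurable borel" shows "f \<in> borel_measurable P"
  by (subst measurable_cong_sets[OF sP refl]) (rule assms)

lemma obtB: obtains B0 where "\<forall>x\<in>X. norm x \<le> B0"
  using bX unfolding bounded_iff by blast

end

locale DC = LX +
  fixes p :: nat and a :: real and R :: "nat set" and \<nu> :: "nat \<Rightarrow> real" and e :: "nat \<Rightarrow> real^'d \<Rightarrow> real"
  assumes a0: "a \<ge> 0" and ED: "eigen_decomp (poly_kernel p a) P X R \<nu> e"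
begin

lemma nu_pos: "r \<in> R \<Longrightarrow> \<nu> r > 0" using ED by (simp add: eigen_decomp_def)
lemma e_meas: "r \<in> R \<Longrightarrow> e r \<in> borel_measurable P" using ED by (simp add: eigen_decomp_def)
lemma e_sq: "r \<in> R \<Longrightarrow> integrable P (\<lambda>x. (e r x)\<^sup>2)" using ED by (simp add: eigen_decomp_def)
lemma orth: "r \<in> R \<Longrightarrow> s \<in> R \<Longrightarrow> (\<integral>x. e r x * e s x \<partial>P) = (if r = s then 1 else 0)"
  using ED by (simp add: eigen_decomp_def)
lemma eig: "r \<in> R \<Longrightarrow> y \<in> X \<Longrightarrow> (\<integral>x. poly_kernel p a x y * e r x \<partial>P) = \<nu> r * e r y"
  using ED by (simp add: eigen_decomp_def)
lemma dec: "x \<in> X \<Longrightarrow> y \<in> X \<Longrightarrow> ((\<lambda>r. \<nu> r * e r x * e r y) has_sum poly_kernel p a x y) R"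
  using ED by (simp add: eigen_decomp_def)

lemma e_int: "r \<in> R \<Longrightarrow> integrable P (e r)"
proof -
  interpret prob_space P by (rule ps)
  assume r: "r \<in> R"
  show ?thesis by (rule square_integrable_imp_integrable[OF e_meas[OF r] e_sq[OF r]])
qed

lemma Mint: "r \<in> R \<Longrightarrow> integrable P (\<lambda>y. Mf s y * e r y)"
proof -
  assume r: "r \<in> R"
  obtain B0 where B0: "\<forall>x\<in>X. norm x \<le> B0" by (rule obtB)
  define B where "B = (max 1 B0) ^ length s"
  have "integrable P (\<lambda>y. B * e r y)" using e_int[OF r] by simp
  moreover have "(\<lambda>y. Mf s y * e r y) \<in> borel_measurable P"
    using e_meas[OF r] measP[OF Mf_meas] by measurable
  moreover have "AE y in P. norm (Mf s y * e r y) \<le> norm (B * e r y)"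
    using AEX
  proof eventually_elim
    case (elim y)
    have "\<bar>Mf s y\<bar> \<le> B" using Mf_bound[OF B0] elim by (auto simp: B_def)
    then show ?case by (auto simp: abs_mult intro!: mult_right_mono)
  qed
  ultimately show ?thesis by (rule Bochner_Integration.integrable_bound)
qed

lemma eigM: "r \<in> R \<Longrightarrow> x \<in> X \<Longrightarrow> (\<Sum>s\<in>Lp p. Wf a s * Mf s x * beta s P e r) = \<nu> r * e r x"
proof -
  assume r: "r \<in> R" and x: "x \<in> X"
  have "\<nu> r * e r x = (\<integral>y. poly_kernel p a y x * e r y \<partial>P)" using eig[OF r x] by simp
  also have "\<dots> = (\<integral>y. (\<Sum>s\<in>Lp p. (Wf a s * Mf s x) * (Mf s y * e r y)) \<partial>P)"
    unfolding poly_kernel_def kernel_expand by (simp add: sum_distrib_left sum_distrib_right mult_ac)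
  also have "\<dots> = (\<Sum>s\<in>Lp p. (Wf a s * Mf s x) * beta s P e r)"
    by (subst Bochner_Integration.integral_sum) (auto simp: Mint[OF r] beta_def)
  finally show ?thesis by simp
qed

lemma e_repr: "r \<in> R \<Longrightarrow> x \<in> X \<Longrightarrow> e r x = (\<Sum>s\<in>Lp p. (Wf a s * beta s P e r / \<nu> r) * Mf s x)"
proof -
  assume r: "r \<in> R" and x: "x \<in> X"
  have "e r x = (\<Sum>s\<in>Lp p. Wf a s * Mf s x * beta s P e r) / \<nu> r"
    using eigM[OF r x] nu_pos[OF r] by simp
  then show ?thesis by (simp add: sum_divide_distrib mult_ac)
qed

lemma e_bdd: "r \<in> R \<Longrightarrow> \<exists>E. \<forall>x\<in>X. \<bar>e r x\<bar> \<le> E"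
proof -
  assume r: "r \<in> R"
  obtain B0 where B0: "\<forall>x\<in>X. norm x \<le> B0" by (rule obtB)
  define B where "B = (max 1 B0) ^ p"
  have MB: "\<bar>Mf s x\<bar> \<le> B" if "s \<in> Lp p" "x \<in> X" for s x
    using Mf_bound[OF B0] that by (auto simp: B_def Lp_def)
  show ?thesis
  proof (intro exI ballI)
    fix x assume x: "x \<in> X"
    have "\<bar>e r x\<bar> \<le> (\<Sum>s\<in>Lp p. \<bar>(Wf a s * beta s P e r / \<nu> r) * Mf s x\<bar>)"
      unfolding e_repr[OF r x] by (rule sum_abs)
    also have "\<dots> \<le> (\<Sum>s\<in>Lp p. \<bar>Wf a s * beta s P e r / \<nu> r\<bar> * B)"
      using MB x by (auto simp: abs_mult intro!: sum_mono divide_right_mono mult_left_mono)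
    finally show "\<bar>e r x\<bar> \<le> (\<Sum>s\<in>Lp p. \<bar>Wf a s * beta s P e r / \<nu> r\<bar> * B)" .
  qed
qed

lemma prod_int: "r \<in> R \<Longrightarrow> r' \<in> R \<Longrightarrow> integrable P (\<lambda>y. e r y * e r' y)"
proof -
  interpret prob_space P by (rule ps)
  assume r: "r \<in> R" and r': "r' \<in> R"
  obtain E where E: "\<forall>x\<in>X. \<bar>e r x\<bar> \<le> E" using e_bdd[OF r] by blast
  obtain E' where E': "\<forall>x\<in>X. \<bar>e r' x\<bar> \<le> E'" using e_bdd[OF r'] by blast
  show ?thesis
  proof (rule integrable_const_bound)
    show "AE x in P. norm (e r x * e r' x) \<le> E * E'"
      using AEX
    proof eventually_elim
      case (elim x)
      then show ?case using E E' by (auto simp: abs_mult intro!: mult_mono order_trans[OF abs_ge_zero])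
    qed
    show "(\<lambda>x. e r x * e r' x) \<in> borel_measurable P" using e_meas[OF r] e_meas[OF r'] by measurable
  qed
qed

lemma gram: "r \<in> R \<Longrightarrow> r' \<in> R \<Longrightarrow>
   (\<Sum>s\<in>Lp p. Wf a s * beta s P e r * beta s P e r') = (if r = r' then \<nu> r else 0)"
proof -
  assume r: "r \<in> R" and r': "r' \<in> R"
  have "(\<Sum>s\<in>Lp p. Wf a s * beta s P e r * beta s P e r')
      = (\<Sum>s\<in>Lp p. (Wf a s * beta s P e r') * (\<integral>y. Mf s y * e r y \<partial>P))"
    by (simp add: beta_def mult_ac)
  also have "\<dots> = (\<integral>y. (\<Sum>s\<in>Lp p. (Wf a s * beta s P e r') * (Mf s y * e r y)) \<partial>P)"
    by (subst Bochner_Integration.integral_sum) (auto simp: Mint[OF r] integral_mult_right_zero)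
  also have "\<dots> = (\<integral>y. \<nu> r' * (e r' y * e r y) \<partial>P)"
  proof (rule integral_cong_AE)
    show "AE y in P. (\<Sum>s\<in>Lp p. (Wf a s * beta s P e r') * (Mf s y * e r y)) = \<nu> r' * (e r' y * e r y)"
      using AEX
    proof eventually_elim
      case (elim y)
      have "(\<Sum>s\<in>Lp p. (Wf a s * beta s P e r') * (Mf s y * e r y))
          = (\<Sum>s\<in>Lp p. Wf a s * Mf s y * beta s P e r') * e r y"
        by (simp add: sum_distrib_left sum_distrib_right mult_ac)
      then show ?case using eigM[OF r' elim] by simp
    qed
    show "(\<lambda>y. \<Sum>s\<in>Lp p. Wf a s * beta s P e r' * (Mf s y * e r y)) \<in> borel_measurable P"
      using e_meas[OF r] measP[OF Mf_meas] by measurable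
    show "(\<lambda>y. \<nu> r' * (e r' y * e r y)) \<in> borel_measurable P"
      using e_meas[OF r] e_meas[OF r'] by measurable
  qed
  also have "\<dots> = \<nu> r' * (if r' = r then 1 else 0)" using orth[OF r' r] by simp
  finally show ?thesis by auto
qed


lemma R_fin: "finite R"
proof -
  have "card I \<le> card (Lp p :: 'd option list set)" if I: "I \<subseteq> R" "finite I" for I
  proof (rule count_bound[where S="Lp p" and I=I and w="Wf a" and u="\<lambda>r s. beta s P e r / sqrt (\<nu> r)"])
    show "\<And>s. s \<in> Lp p \<Longrightarrow> 0 \<le> Wf a s" using Wf_nonneg[OF a0] by blast
    show "finite (Lp p)" by (rule finite_Lp)
    show "finite I" by fact
    fix i j assume ij: "i \<in> I" "j \<in> I"
    then have ij': "i \<in> R" "j \<in> R" using I by auto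
    have "(\<Sum>s\<in>Lp p. Wf a s * (beta s P e i / sqrt (\<nu> i)) * (beta s P e j / sqrt (\<nu> j)))
        = (\<Sum>s\<in>Lp p. Wf a s * beta s P e i * beta s P e j) / (sqrt (\<nu> i) * sqrt (\<nu> j))"
      by (simp add: sum_divide_distrib)
    also have "\<dots> = (if i = j then 1 else 0)"
      using gram[OF ij'] nu_pos[OF ij'(1)] by (auto simp: real_sqrt_mult[symmetric])
    finally show "(\<Sum>s\<in>Lp p. Wf a s * (beta s P e i / sqrt (\<nu> i)) * (beta s P e j / sqrt (\<nu> j))) = (if i = j then 1 else 0)" .
  qed
  then show ?thesis using finite_if_finite_subsets_card_bdd by blast
qed

lemma zM:
  assumes x: "x \<in> X" and s: "s \<in> Lp p" and W: "Wf a s \<noteq> 0"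
  shows "Mf s x = (\<Sum>r\<in>R. e r x * beta s P e r)"
proof -
  have kxx: "(\<Sum>s\<in>Lp p. Wf a s * (Mf s x)\<^sup>2) = (\<Sum>r\<in>R. \<nu> r * e r x * e r x)"
  proof -
    have "(\<Sum>s\<in>Lp p. Wf a s * (Mf s x)\<^sup>2) = poly_kernel p a x x"
      by (simp add: poly_kernel_def kernel_expand power2_eq_square mult_ac)
    also have "\<dots> = (\<Sum>r\<in>R. \<nu> r * e r x * e r x)"
      using has_sum_unique[OF dec[OF x x] has_sum_finite[OF R_fin]] by simp
    finally show ?thesis .
  qed
  have "(\<Sum>s\<in>Lp p. Wf a s * (Mf s x - (\<Sum>r\<in>R. e r x * beta s P e r))\<^sup>2)
      = (\<Sum>s\<in>Lp p. Wf a s * (Mf s x)\<^sup>2) - 2 * (\<Sum>r\<in>R. e r x * (\<Sum>s\<in>Lp p. Wf a s * Mf s x * beta s P e r))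
       + (\<Sum>r\<in>R. \<Sum>r'\<in>R. e r x * e r' x * (\<Sum>s\<in>Lp p. Wf a s * beta s P e r * beta s P e r'))"
    by (rule expand_sq)
  also have "\<dots> = (\<Sum>r\<in>R. \<nu> r * e r x * e r x) - 2 * (\<Sum>r\<in>R. e r x * (\<nu> r * e r x))
       + (\<Sum>r\<in>R. \<Sum>r'\<in>R. e r x * e r' x * (if r = r' then \<nu> r else 0))"
    using eigM[OF _ x] gram kxx by simp
  also have "(\<Sum>r\<in>R. \<Sum>r'\<in>R. e r x * e r' x * (if r = r' then \<nu> r else 0)) = (\<Sum>r\<in>R. e r x * e r x * \<nu> r)"
  proof (rule sum.cong[OF refl])
    fix r assume r: "r \<in> R"
    have "(\<Sum>r'\<in>R. e r x * e r' x * (if r = r' then \<nu> r else 0)) = (\<Sum>r'\<in>R. if r' = r then e r x * e r x * \<nu> r else 0)"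
      by (rule sum.cong) auto
    then show "(\<Sum>r'\<in>R. e r x * e r' x * (if r = r' then \<nu> r else 0)) = e r x * e r x * \<nu> r"
      using r R_fin by simp
  qed
  finally have Z: "(\<Sum>s\<in>Lp p. Wf a s * (Mf s x - (\<Sum>r\<in>R. e r x * beta s P e r))\<^sup>2) = 0"
    by (simp add: sum_distrib_left mult_ac)
  have "(\<Sum>s\<in>Lp p. Wf a s * (Mf s x - (\<Sum>r\<in>R. e r x * beta s P e r))\<^sup>2) = 0 \<longleftrightarrow>
      (\<forall>s\<in>Lp p. Wf a s * (Mf s x - (\<Sum>r\<in>R. e r x * beta s P e r))\<^sup>2 = 0)"
    by (rule sum_nonneg_eq_0_iff[OF finite_Lp]) (intro mult_nonneg_nonneg Wf_nonneg[OF a0] zero_le_power2)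
  with Z have "\<forall>s\<in>Lp p. Wf a s * (Mf s x - (\<Sum>r\<in>R. e r x * beta s P e r))\<^sup>2 = 0" by blast
  then have "Wf a s * (Mf s x - (\<Sum>r\<in>R. e r x * beta s P e r))\<^sup>2 = 0" using s by blast
  then show ?thesis using W by simp
qed

lemma orth_sum: "(\<integral>y. (\<Sum>r\<in>R. d r * e r y)\<^sup>2 \<partial>P) = (\<Sum>r\<in>R. (d r)\<^sup>2)"
proof -
  have "(\<integral>y. (\<Sum>r\<in>R. d r * e r y)\<^sup>2 \<partial>P) = (\<integral>y. (\<Sum>r\<in>R. \<Sum>r'\<in>R. d r * d r' * (e r y * e r' y)) \<partial>P)"
    by (simp add: power2_eq_square sum_product mult_ac)
  also have "\<dots> = (\<Sum>r\<in>R. \<Sum>r'\<in>R. d r * d r' * (\<integral>y. e r y * e r' y \<partial>P))"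
    by (subst Bochner_Integration.integral_sum, auto intro!: Bochner_Integration.integrable_sum prod_int
        simp: Bochner_Integration.integral_sum prod_int)
  also have "\<dots> = (\<Sum>r\<in>R. \<Sum>r'\<in>R. if r' = r then d r * d r else 0)"
    by (intro sum.cong refl) (auto simp: orth)
  also have "\<dots> = (\<Sum>r\<in>R. (d r)\<^sup>2)"
    using R_fin by (simp add: power2_eq_square)
  finally show ?thesis .
qed


lemma ref_bound:
  "\<exists>C>0. \<forall>c::'d option list \<Rightarrow> real. (\<forall>s\<in>Lp p. Wf a s = 0 \<longrightarrow> c s = 0) \<longrightarrow>
      (\<forall>x\<in>X. (\<Sum>s\<in>Lp p. c s * Mf s x)\<^sup>2 \<le> C * (\<integral>y. (\<Sum>s\<in>Lp p. c s * Mf s y)\<^sup>2 \<partial>P))"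
proof -
  have "\<forall>r\<in>R. \<exists>E. \<forall>x\<in>X. \<bar>e r x\<bar> \<le> E" using e_bdd by blast
  then obtain E where E: "\<And>r x. r \<in> R \<Longrightarrow> x \<in> X \<Longrightarrow> \<bar>e r x\<bar> \<le> E r" by metis
  define C where "C = 1 + (\<Sum>r\<in>R. (E r)\<^sup>2)"
  have Cpos: "C > 0" unfolding C_def by (simp add: add_pos_nonneg sum_nonneg)
  have eC: "(\<Sum>r\<in>R. (e r x)\<^sup>2) \<le> C" if x: "x \<in> X" for x
  proof -
    have "(\<Sum>r\<in>R. (e r x)\<^sup>2) \<le> (\<Sum>r\<in>R. (E r)\<^sup>2)"
    proof (rule sum_mono)
      fix r assume r: "r \<in> R"
      have "\<bar>e r x\<bar> \<le> \<bar>E r\<bar>" using E[OF r x] by simp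
      then show "(e r x)\<^sup>2 \<le> (E r)\<^sup>2" by (simp add: abs_le_square_iff)
    qed
    then show ?thesis unfolding C_def by simp
  qed
  show ?thesis
  proof (intro exI[of _ C] conjI allI impI ballI Cpos)
    fix c :: "'d option list \<Rightarrow> real" and x assume c: "\<forall>s\<in>Lp p. Wf a s = 0 \<longrightarrow> c s = 0" and x: "x \<in> X"
    define d where "d r = (\<Sum>s\<in>Lp p. c s * beta s P e r)" for r
    have G: "(\<Sum>s\<in>Lp p. c s * Mf s y) = (\<Sum>r\<in>R. d r * e r y)" if y: "y \<in> X" for y
    proof -
      have "(\<Sum>s\<in>Lp p. c s * Mf s y) = (\<Sum>s\<in>Lp p. c s * (\<Sum>r\<in>R. e r y * beta s P e r))"
      proof (rule sum.cong[OF refl])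
        fix s :: "'d option list" assume s: "s \<in> Lp p"
        show "c s * Mf s y = c s * (\<Sum>r\<in>R. e r y * beta s P e r)"
          using c s zM[OF y s] by (cases "Wf a s = 0") auto
      qed
      also have "\<dots> = (\<Sum>r\<in>R. d r * e r y)"
        unfolding d_def by (simp add: sum_distrib_left sum_distrib_right sum.swap[of _ R] mult_ac)
      finally show ?thesis .
    qed
    have "(\<integral>y. (\<Sum>s\<in>Lp p. c s * Mf s y)\<^sup>2 \<partial>P) = (\<integral>y. (\<Sum>r\<in>R. d r * e r y)\<^sup>2 \<partial>P)"
    proof (rule integral_cong_AE)
      show "AE y in P. (\<Sum>s\<in>Lp p. c s * Mf s y)\<^sup>2 = (\<Sum>r\<in>R. d r * e r y)\<^sup>2"
        using AEX by eventually_elim (simp add: G)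
      show "(\<lambda>y. (\<Sum>s\<in>Lp p. c s * Mf s y)\<^sup>2) \<in> borel_measurable P"
        using measP[OF Mf_meas] by measurable
      show "(\<lambda>y. (\<Sum>r\<in>R. d r * e r y)\<^sup>2) \<in> borel_measurable P"
        using e_meas by measurable
    qed
    also have "\<dots> = (\<Sum>r\<in>R. (d r)\<^sup>2)" by (rule orth_sum)
    finally have I: "(\<integral>y. (\<Sum>s\<in>Lp p. c s * Mf s y)\<^sup>2 \<partial>P) = (\<Sum>r\<in>R. (d r)\<^sup>2)" .
    have "(\<Sum>s\<in>Lp p. c s * Mf s x)\<^sup>2 = (\<Sum>r\<in>R. d r * e r x)\<^sup>2" using G[OF x] by simp
    also have "\<dots> \<le> (\<Sum>r\<in>R. (d r)\<^sup>2) * (\<Sum>r\<in>R. (e r x)\<^sup>2)" by (rule Cauchy_Schwarz_ineq_sum)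
    also have "\<dots> \<le> (\<Sum>r\<in>R. (d r)\<^sup>2) * C"
      by (intro mult_left_mono eC[OF x] sum_nonneg) auto
    finally show "(\<Sum>s\<in>Lp p. c s * Mf s x)\<^sup>2 \<le> C * (\<integral>y. (\<Sum>s\<in>Lp p. c s * Mf s y)\<^sup>2 \<partial>P)"
      using I by (simp add: mult_ac)
  qed
qed

end

context LX begin

lemma class_bound:
  "\<exists>C>0. \<forall>a R \<nu> e. a \<ge> 0 \<and> (a > 0 \<longleftrightarrow> b) \<and> eigen_decomp (poly_kernel p a) P X R \<nu> e \<longrightarrow>
      finite R \<and> (\<forall>x\<in>X. (\<Sum>r\<in>R. (e r x)\<^sup>2) \<le> C)"
proof (cases "\<exists>a R \<nu> e. a \<ge> 0 \<and> (a > 0 \<longleftrightarrow> b) \<and> eigen_decomp (poly_kernel p a) P X R \<nu> e")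
  case False
  then show ?thesis by (intro exI[of _ 1]) auto
next
  case True
  then obtain a' R' \<nu>' e' where a': "a' \<ge> 0" "a' > 0 \<longleftrightarrow> b" and ED': "eigen_decomp (poly_kernel p a') P X R' \<nu>' e'"
    by blast
  interpret ref: DC X P p a' R' \<nu>' e'
    by (rule DC.intro[OF LX_axioms]) (unfold_locales; fact)
  obtain C where C: "C > 0" and CB: "\<And>c::'d option list \<Rightarrow> real. (\<forall>s\<in>Lp p. Wf a' s = 0 \<longrightarrow> c s = 0) \<Longrightarrow>
      (\<forall>x\<in>X. (\<Sum>s\<in>Lp p. c s * Mf s x)\<^sup>2 \<le> C * (\<integral>y. (\<Sum>s\<in>Lp p. c s * Mf s y)\<^sup>2 \<partial>P))"
    using ref.ref_bound by blast
  show ?thesis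
  proof (intro exI[of _ C] conjI C allI impI)
    fix a R \<nu> e assume A: "a \<ge> 0 \<and> (a > 0 \<longleftrightarrow> b) \<and> eigen_decomp (poly_kernel p a) P X R \<nu> e"
    interpret act: DC X P p a R \<nu> e
      by (rule DC.intro[OF LX_axioms]) (unfold_locales; use A in simp)
    show "finite R" by (rule act.R_fin)
    show "\<forall>x\<in>X. (\<Sum>r\<in>R. (e r x)\<^sup>2) \<le> C"
    proof
      fix x0 assume x0: "x0 \<in> X"
      define T where "T = (\<Sum>r\<in>R. (e r x0)\<^sup>2)"
      define c where "c s = (\<Sum>r\<in>R. e r x0 * (Wf a s * beta s P e r / \<nu> r))" for s
      have rep: "(\<Sum>r\<in>R. e r x0 * e r y) = (\<Sum>s\<in>Lp p. c s * Mf s y)" if y: "y \<in> X" for y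
      proof -
        have "(\<Sum>r\<in>R. e r x0 * e r y) = (\<Sum>r\<in>R. e r x0 * (\<Sum>s\<in>Lp p. (Wf a s * beta s P e r / \<nu> r) * Mf s y))"
          by (intro sum.cong refl) (simp add: act.e_repr[OF _ y])
        also have "\<dots> = (\<Sum>s\<in>Lp p. c s * Mf s y)"
          unfolding c_def by (simp add: sum_distrib_left sum_distrib_right sum.swap[of _ R] mult_ac)
        finally show ?thesis .
      qed
      have cz: "\<forall>s\<in>Lp p. Wf a' s = 0 \<longrightarrow> c s = 0"
      proof (intro ballI impI)
        fix s :: "'d option list" assume "s \<in> Lp p" "Wf a' s = 0"
        then have "a' = 0 \<and> None \<in> set s" using Wf_zero_iff[OF a'(1)] by blast
        then have "Wf a s = 0" using A a' Wf_zero_iff[of a s] by auto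
        then show "c s = 0" by (simp add: c_def)
      qed
      have "(\<integral>y. (\<Sum>s\<in>Lp p. c s * Mf s y)\<^sup>2 \<partial>P) = (\<integral>y. (\<Sum>r\<in>R. e r x0 * e r y)\<^sup>2 \<partial>P)"
      proof (rule integral_cong_AE)
        show "AE y in P. (\<Sum>s\<in>Lp p. c s * Mf s y)\<^sup>2 = (\<Sum>r\<in>R. e r x0 * e r y)\<^sup>2"
          using AEX by eventually_elim (simp add: rep)
        show "(\<lambda>y. (\<Sum>s\<in>Lp p. c s * Mf s y)\<^sup>2) \<in> borel_measurable P"
          using measP[OF Mf_meas] by measurable
        show "(\<lambda>y. (\<Sum>r\<in>R. e r x0 * e r y)\<^sup>2) \<in> borel_measurable P"
          using act.e_meas by measurable
      qed
      also have "\<dots> = T" unfolding T_def by (rule act.orth_sum)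
      finally have IT: "(\<integral>y. (\<Sum>s\<in>Lp p. c s * Mf s y)\<^sup>2 \<partial>P) = T" .
      have "T\<^sup>2 = (\<Sum>s\<in>Lp p. c s * Mf s x0)\<^sup>2"
        using rep[OF x0] by (simp add: T_def power2_eq_square)
      also have "\<dots> \<le> C * T" using CB[OF cz] x0 IT by simp
      finally have TT: "T * T \<le> C * T" by (simp add: power2_eq_square)
      have T0: "T \<ge> 0" unfolding T_def by (simp add: sum_nonneg)
      show "T \<le> C"
      proof (cases "T = 0")
        case True then show ?thesis using C by simp
      next
        case False
        then have "T > 0" using T0 by simp
        then show ?thesis using TT by (simp add: mult_le_cancel_right)
      qed
    qed
  qed
qed

end



theorem lemma3:
  fixes p :: nat and X :: "(real ^ 'd) set" and P :: "(real ^ 'd) measure"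
  assumes "X \<in> sets borel" and "bounded X" and "X \<noteq> {}"
    and "prob_space P" and "sets P = sets borel" and "emeasure P X = 1"
  shows "\<exists>C>0. \<forall>a\<ge>0. \<forall>\<gamma>>0. \<forall>R \<nu> e.
           eigen_decomp (poly_kernel p a) P X R \<nu> e \<longrightarrow> H_gamma \<gamma> X R \<nu> e \<le> ereal C"
proof -
  interpret LX X P by (rule LX.intro) (rule assms)+
  obtain C1 where C1: "C1 > 0" and B1: "\<And>a R \<nu> e. a \<ge> 0 \<and> (a > 0 \<longleftrightarrow> True) \<and> eigen_decomp (poly_kernel p a) P X R \<nu> e \<Longrightarrow>
      finite R \<and> (\<forall>x\<in>X. (\<Sum>r\<in>R. (e r x)\<^sup>2) \<le> C1)"
    using class_bound[of True p] by blast
  obtain C0 where C0: "C0 > 0" and B0: "\<And>a R \<nu> e. a \<ge> 0 \<and> (a > 0 \<longleftrightarrow> False) \<and> eigen_decomp (poly_kernel p a) P X R \<nu> e \<Longrightarrow>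
      finite R \<and> (\<forall>x\<in>X. (\<Sum>r\<in>R. (e r x)\<^sup>2) \<le> C0)"
    using class_bound[of False p] by blast
  show ?thesis
  proof (intro exI[of _ "max C1 C0"] conjI allI impI)
    show "max C1 C0 > 0" using C1 by simp
    fix a \<gamma> :: real and R \<nu> and e :: "nat \<Rightarrow> real^'d \<Rightarrow> real"
    assume a: "a \<ge> 0" and g: "\<gamma> > 0" and ED: "eigen_decomp (poly_kernel p a) P X R \<nu> e"
    have fb: "finite R \<and> (\<forall>x\<in>X. (\<Sum>r\<in>R. (e r x)\<^sup>2) \<le> max C1 C0)"
    proof (cases "a > 0")
      case True
      then show ?thesis using B1[of a R \<nu> e] a ED by force
    next
      case False
      then show ?thesis using B0[of a R \<nu> e] a ED by force
    qed
    have nu: "\<And>r. r \<in> R \<Longrightarrow> \<nu> r > 0" using ED by (simp add: eigen_decomp_def)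
    show "H_gamma \<gamma> X R \<nu> e \<le> ereal (max C1 C0)"
      unfolding H_gamma_def
    proof (rule SUP_least)
      fix x assume x: "x \<in> X"
      have "(\<Sum>r\<in>R. (1 / (1 + \<gamma> / \<nu> r)) * (e r x)\<^sup>2) \<le> (\<Sum>r\<in>R. (e r x)\<^sup>2)"
      proof (rule sum_mono)
        fix r assume r: "r \<in> R"
        have "\<gamma> / \<nu> r \<ge> 0" using g nu[OF r] by simp
        then have "1 / (1 + \<gamma> / \<nu> r) \<le> 1" by simp
        then show "(1 / (1 + \<gamma> / \<nu> r)) * (e r x)\<^sup>2 \<le> (e r x)\<^sup>2"
          by (intro mult_left_le_one_le) (auto simp: \<open>\<gamma> / \<nu> r \<ge> 0\<close> add_nonneg_nonneg)
      qed
      also have "\<dots> \<le> max C1 C0" using fb x by blast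
      finally have "(\<Sum>\<^sub>\<infinity>r\<in>R. (1 / (1 + \<gamma> / \<nu> r)) * (e r x)\<^sup>2) \<le> max C1 C0"
        using fb by simp
      then show "ereal (\<Sum>\<^sub>\<infinity>r\<in>R. (1 / (1 + \<gamma> / \<nu> r)) * (e r x)\<^sup>2) \<le> ereal (max C1 C0)"
        by (simp only: ereal_less_eq(3))
    qed
  qed
qed

end
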